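(* Let $x^*\in\mathbb{O}^n$. Then $x^*$ is an equilibrium of the PID opinion dynamics (i.e., $P_i(x^* )=\{x_i^*\}$ for every $i\in\mathcal V$) if and only if at least one of the following holds: (1) $x^*$ is a consensus state, i.e., $x_1^*=x_2^*=\cdots=x_n^*$; (2) for every $z\in\mathbb{O}$ with $z<\theta$, the set $\mathcal V_{\le z}(x^* )$ is a strictly cohesive set in $\mathcal G(W)$, and for every $z\in\mathbb{O}$ with $z>\theta$, the set $\mathcal V_{\ge z}(x^* )$ is a strictly cohesive set in $\mathcal G(W)$.
   Context: Let $n\ge 1$, $\mathcal V=\{1,\dots,n\}$, and let $W=(w_{ij})$ be an $n\times n$ row-stochastic matrix (nonnegative entries, each row summing to $1$); $\mathcal G(W)$ is the weighted directed graph on $\mathcal V$ with an edge $i\to j$ iff $w_{ij}>0$. The opinion set is a finite set of consecutive integers $\mathbb O=\{k,k+1,\dots,k+s\}$, and $\theta\in\mathbb O$ is a fixed "truth". For $x\in\mathbb O^n$, $i\in\mathcal V$, $z\in\mathbb O$, define the social cost $C^i_{\mathrm{social}}(z;x)=\sum_{j=1}^n w_{ij}|z-x_j|$ and the cognitive cost $C^i_{\mathrm{cog}}(z)=|z-\theta|$. The Pareto-improvement set is $P_i(x)=\{z\in\mathbb O: C^i_{\mathrm{social}}(z;x)\le C^i_{\mathrm{social}}(x_i;x),\ |z-\theta|\le |x_i-\theta|\}$. In the PID opinion dynamics, starting from $x(0)\in\mathbb O^n$, at each time $t+1$ a node $i$ is chosen uniformly at random from $\mathcal V$ and sets $x_i(t+1)$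 to an element chosen at random from $P_i(x(t))$; all other nodes keep their opinions. An equilibrium is a state $x^*$ with $P_i(x^* )=\{x^*_i\}$ for all $i$. For $x\in\mathbb O^n$ and $z\in\mathbb Z$, $\mathcal V_{\le z}(x)=\{j\in\mathcal V: x_j\le z\}$ and $\mathcal V_{\ge z}(x)=\{j\in\mathcal V: x_j\ge z\}$. A set $\mathcal M\subseteq\mathcal V$ is strictly cohesive if $\sum_{j\in\mathcal M}w_{ij}>\tfrac12$ for every $i\in\mathcal M$; by convention the empty set is strictly cohesive. *)

theory Defs
  imports Complex_Main
begin

definition row_stochastic :: "nat \<Rightarrow> (nat \<Rightarrow> nat \<Rightarrow> real) \<Rightarrow> bool" where
  "row_stochastic n W \<longleftrightarrow>
     (\<forall>i\<in>{1..n}. \<forall>j\<in>{1..n}. W i j \<ge> 0) \<and> (\<forall>i\<in>{1..n}. (\<Sum>j\<in>{1..n}. W i j) = 1)"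

definition opinion_set :: "int \<Rightarrow> nat \<Rightarrow> int set" where
  "opinion_set k s = {k..k + int s}"

definition social_cost :: "nat \<Rightarrow> (nat \<Rightarrow> nat \<Rightarrow> real) \<Rightarrow> nat \<Rightarrow> int \<Rightarrow> (nat \<Rightarrow> int) \<Rightarrow> real" where
  "social_cost n W i z x = (\<Sum>j\<in>{1..n}. W i j * real_of_int \<bar>z - x j\<bar>)"

definition cog_cost :: "int \<Rightarrow> int \<Rightarrow> int" where
  "cog_cost \<theta> z = \<bar>z - \<theta>\<bar>"

definition pareto_set :: "nat \<Rightarrow> (nat \<Rightarrow> nat \<Rightarrow> real) \<Rightarrow> int set \<Rightarrow> int \<Rightarrow> nat \<Rightarrow> (nat \<Rightarrow> int) \<Rightarrow> int set" where
  "pareto_set n W Opn \<theta> i x =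
     {z \<in> Opn. social_cost n W i z x \<le> social_cost n W i (x i) x \<and> cog_cost \<theta> z \<le> cog_cost \<theta> (x i)}"

definition is_equilibrium :: "nat \<Rightarrow> (nat \<Rightarrow> nat \<Rightarrow> real) \<Rightarrow> int set \<Rightarrow> int \<Rightarrow> (nat \<Rightarrow> int) \<Rightarrow> bool" where
  "is_equilibrium n W Opn \<theta> x \<longleftrightarrow> (\<forall>i\<in>{1..n}. pareto_set n W Opn \<theta> i x = {x i})"

definition V_le :: "nat \<Rightarrow> (nat \<Rightarrow> int) \<Rightarrow> int \<Rightarrow> nat set" where
  "V_le n x z = {j\<in>{1..n}. x j \<le> z}"

definition V_ge :: "nat \<Rightarrow> (nat \<Rightarrow> int) \<Rightarrow> int \<Rightarrow> nat set" where
  "V_ge n x z = {j\<in>{1..n}. x j \<ge> z}"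

definition strictly_cohesive :: "(nat \<Rightarrow> nat \<Rightarrow> real) \<Rightarrow> nat set \<Rightarrow> bool" where
  "strictly_cohesive W M \<longleftrightarrow> (\<forall>i\<in>M. (\<Sum>j\<in>M. W i j) > 1/2)"

definition is_consensus :: "nat \<Rightarrow> (nat \<Rightarrow> int) \<Rightarrow> bool" where
  "is_consensus n x \<longleftrightarrow> (\<forall>i\<in>{1..n}. \<forall>j\<in>{1..n}. x i = x j)"

end

theory Submission imports Defs begin

lemma sum_sign:
  assumes "finite A"
  shows "(\<Sum>j\<in>A. w j * (if P j then 1 else -1)) = 2 * (\<Sum>j\<in>{j\<in>A. P j}. w j) - (\<Sum>j\<in>A. (w j::real))"
proof -
  have "(\<Sum>j\<in>A. w j * (if P j then 1 else -1)) = (\<Sum>j\<in>A. 2 * (if P j then w j else 0) - w j)"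
    by (rule sum.cong) auto
  also have "\<dots> = 2 * (\<Sum>j\<in>A. (if P j then w j else 0)) - (\<Sum>j\<in>A. w j)"
    by (simp add: sum_subtractf sum_distrib_left)
  also have "(\<Sum>j\<in>A. (if P j then w j else 0)) = (\<Sum>j\<in>{j\<in>A. P j}. w j)"
    using assms by (simp add: sum.inter_filter)
  finally show ?thesis .
qed

lemma lower_left:
  assumes "finite A" "\<forall>j\<in>A. w j \<ge> 0" "(z::int) < a"
  shows "(\<Sum>j\<in>A. w j * real_of_int \<bar>z - x j\<bar>) - (\<Sum>j\<in>A. w j * real_of_int \<bar>a - x j\<bar>)
     \<ge> real_of_int (a - z) * (2 * (\<Sum>j\<in>{j\<in>A. x j \<ge> a}. w j) - (\<Sum>j\<in>A. w j))"
proof -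
  have "real_of_int (a - z) * (2 * (\<Sum>j\<in>{j\<in>A. x j \<ge> a}. w j) - (\<Sum>j\<in>A. w j))
     = (\<Sum>j\<in>A. w j * (real_of_int (a - z) * (if x j \<ge> a then 1 else -1)))"
    using sum_sign[OF assms(1), of w "\<lambda>j. x j \<ge> a"]
      sum_distrib_left[of "real_of_int (a - z)" "\<lambda>j. w j * (if x j \<ge> a then 1 else -1)" A]
    by (simp add: mult_ac)
  also have "\<dots> \<le> (\<Sum>j\<in>A. w j * (real_of_int \<bar>z - x j\<bar> - real_of_int \<bar>a - x j\<bar>))"
  proof (rule sum_mono)
    fix j assume "j \<in> A"
    have "real_of_int (a - z) * (if x j \<ge> a then 1 else -1) \<le> real_of_int \<bar>z - x j\<bar> - real_of_int \<bar>a - x j\<bar>"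
      using assms(3) by auto
    then show "w j * (real_of_int (a - z) * (if x j \<ge> a then 1 else -1)) \<le> w j * (real_of_int \<bar>z - x j\<bar> - real_of_int \<bar>a - x j\<bar>)"
      using assms(2) \<open>j \<in> A\<close> by (simp add: mult_left_mono)
  qed
  also have "\<dots> = (\<Sum>j\<in>A. w j * real_of_int \<bar>z - x j\<bar>) - (\<Sum>j\<in>A. w j * real_of_int \<bar>a - x j\<bar>)"
    by (simp add: sum_subtractf right_diff_distrib)
  finally show ?thesis .
qed

lemma lower_right:
  assumes "finite A" "\<forall>j\<in>A. w j \<ge> 0" "(z::int) > a"
  shows "(\<Sum>j\<in>A. w j * real_of_int \<bar>z - x j\<bar>) - (\<Sum>j\<in>A. w j * real_of_int \<bar>a - x j\<bar>)
     \<ge> real_of_int (z - a) * (2 * (\<Sum>j\<in>{j\<in>A. x j \<le> a}. w j) - (\<Sum>j\<in>A. w j))"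
proof -
  have "real_of_int (z - a) * (2 * (\<Sum>j\<in>{j\<in>A. x j \<le> a}. w j) - (\<Sum>j\<in>A. w j))
     = (\<Sum>j\<in>A. w j * (real_of_int (z - a) * (if x j \<le> a then 1 else -1)))"
    using sum_sign[OF assms(1), of w "\<lambda>j. x j \<le> a"]
      sum_distrib_left[of "real_of_int (z - a)" "\<lambda>j. w j * (if x j \<le> a then 1 else -1)" A]
    by (simp add: mult_ac)
  also have "\<dots> \<le> (\<Sum>j\<in>A. w j * (real_of_int \<bar>z - x j\<bar> - real_of_int \<bar>a - x j\<bar>))"
  proof (rule sum_mono)
    fix j assume "j \<in> A"
    have "real_of_int (z - a) * (if x j \<le> a then 1 else -1) \<le> real_of_int \<bar>z - x j\<bar> - real_of_int \<bar>a - x j\<bar>"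
      using assms(3) by auto
    then show "w j * (real_of_int (z - a) * (if x j \<le> a then 1 else -1)) \<le> w j * (real_of_int \<bar>z - x j\<bar> - real_of_int \<bar>a - x j\<bar>)"
      using assms(2) \<open>j \<in> A\<close> by (simp add: mult_left_mono)
  qed
  also have "\<dots> = (\<Sum>j\<in>A. w j * real_of_int \<bar>z - x j\<bar>) - (\<Sum>j\<in>A. w j * real_of_int \<bar>a - x j\<bar>)"
    by (simp add: sum_subtractf right_diff_distrib)
  finally show ?thesis .
qed


lemma step_eq:
  assumes "finite A"
  shows "(\<Sum>j\<in>A. w j * real_of_int \<bar>(a - 1) - x j\<bar>) - (\<Sum>j\<in>A. w j * real_of_int \<bar>a - x j\<bar>)
     = 2 * (\<Sum>j\<in>{j\<in>A. x j \<ge> a}. w j) - (\<Sum>j\<in>A. w j)"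
proof -
  have "(\<Sum>j\<in>A. w j * real_of_int \<bar>(a - 1) - x j\<bar>) - (\<Sum>j\<in>A. w j * real_of_int \<bar>a - x j\<bar>)
     = (\<Sum>j\<in>A. w j * (if x j \<ge> a then 1 else -1))"
    by (simp add: sum_subtractf[symmetric] right_diff_distrib[symmetric], rule sum.cong, auto)
  then show ?thesis using sum_sign[OF assms, of w "\<lambda>j. x j \<ge> a"] by simp
qed

lemma step_eq2:
  assumes "finite A"
  shows "(\<Sum>j\<in>A. w j * real_of_int \<bar>(a + 1) - x j\<bar>) - (\<Sum>j\<in>A. w j * real_of_int \<bar>a - x j\<bar>)
     = 2 * (\<Sum>j\<in>{j\<in>A. x j \<le> a}. w j) - (\<Sum>j\<in>A. w j)"
proof -
  have "(\<Sum>j\<in>A. w j * real_of_int \<bar>(a + 1) - x j\<bar>) - (\<Sum>j\<in>A. w j * real_of_int \<bar>a - x j\<bar>)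
     = (\<Sum>j\<in>A. w j * (if x j \<le> a then 1 else -1))"
    by (simp add: sum_subtractf[symmetric] right_diff_distrib[symmetric], rule sum.cong, auto)
  then show ?thesis using sum_sign[OF assms, of w "\<lambda>j. x j \<le> a"] by simp
qed

lemma node:
  assumes rs: "row_stochastic n W" and i: "i \<in> {1..n}" and th: "\<theta> \<in> opinion_set k s"
    and xi: "xs i \<in> opinion_set k s"
  shows "pareto_set n W (opinion_set k s) \<theta> i xs = {xs i} \<longleftrightarrow>
    ((xs i > \<theta> \<longrightarrow> (\<Sum>j\<in>V_ge n xs (xs i). W i j) > 1/2) \<and>
     (xs i < \<theta> \<longrightarrow> (\<Sum>j\<in>V_le n xs (xs i). W i j) > 1/2))"
proof -
  define a where "a = xs i"
  have T: "(\<Sum>j\<in>{1..n}. W i j) = 1" and nn: "\<forall>j\<in>{1..n}. W i j \<ge> 0"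
    using rs i unfolding row_stochastic_def by auto
  have ge: "V_ge n xs a = {j\<in>{1..n}. xs j \<ge> a}" and le: "V_le n xs a = {j\<in>{1..n}. xs j \<le> a}"
    unfolding V_ge_def V_le_def by auto
  have aP: "a \<in> pareto_set n W (opinion_set k s) \<theta> i xs"
    using xi unfolding pareto_set_def a_def by auto
  show ?thesis unfolding a_def[symmetric]
  proof
    assume P: "pareto_set n W (opinion_set k s) \<theta> i xs = {a}"
    show "(a > \<theta> \<longrightarrow> (\<Sum>j\<in>V_ge n xs a. W i j) > 1/2) \<and>
     (a < \<theta> \<longrightarrow> (\<Sum>j\<in>V_le n xs a. W i j) > 1/2)"
    proof (intro conjI impI)
      assume "a > \<theta>"
      show "(\<Sum>j\<in>V_ge n xs a. W i j) > 1/2"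
      proof (rule ccontr)
        assume "\<not> ?thesis"
        have "social_cost n W i (a - 1) xs - social_cost n W i a xs \<le> 0"
          unfolding social_cost_def using step_eq[of "{1..n}" "W i" a xs] T ge \<open>\<not> _\<close> by simp
        moreover have "a - 1 \<in> opinion_set k s" using th xi \<open>a > \<theta>\<close> unfolding opinion_set_def a_def by auto
        ultimately have "a - 1 \<in> pareto_set n W (opinion_set k s) \<theta> i xs"
          using \<open>a > \<theta>\<close> unfolding pareto_set_def cog_cost_def a_def by auto
        then show False using P by auto
      qed
    next
      assume "a < \<theta>"
      show "(\<Sum>j\<in>V_le n xs a. W i j) > 1/2"
      proof (rule ccontr)
        assume "\<not> ?thesis"
        have "social_cost n W i (a + 1) xs - social_cost n W i a xs \<le> 0"
          unfolding social_cost_def using step_eq2[of "{1..n}" "W i" a xs] T le \<open>\<not> _\<close> by simp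
        moreover have "a + 1 \<in> opinion_set k s" using th xi \<open>a < \<theta>\<close> unfolding opinion_set_def a_def by auto
        ultimately have "a + 1 \<in> pareto_set n W (opinion_set k s) \<theta> i xs"
          using \<open>a < \<theta>\<close> unfolding pareto_set_def cog_cost_def a_def by auto
        then show False using P by auto
      qed
    qed
  next
    assume C: "(a > \<theta> \<longrightarrow> (\<Sum>j\<in>V_ge n xs a. W i j) > 1/2) \<and>
     (a < \<theta> \<longrightarrow> (\<Sum>j\<in>V_le n xs a. W i j) > 1/2)"
    have "z = a" if z: "z \<in> pareto_set n W (opinion_set k s) \<theta> i xs" for z
    proof -
      have sc: "social_cost n W i z xs \<le> social_cost n W i a xs" and cg: "\<bar>z - \<theta>\<bar> \<le> \<bar>a - \<theta>\<bar>"
        using z unfolding pareto_set_def cog_cost_def a_def by auto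
      show ?thesis
      proof (rule ccontr)
        assume "z \<noteq> a"
        consider "a = \<theta>" | "a > \<theta>" | "a < \<theta>" by linarith
        then show False
        proof cases
          case 1 then show False using cg \<open>z \<noteq> a\<close> by auto
        next
          case 2
          with cg \<open>z \<noteq> a\<close> have "z < a" by auto
          have "social_cost n W i z xs - social_cost n W i a xs \<ge> real_of_int (a - z) * (2 * (\<Sum>j\<in>V_ge n xs a. W i j) - 1)"
            unfolding social_cost_def using lower_left[OF _ nn \<open>z < a\<close>, of xs] T ge by simp
          moreover have "real_of_int (a - z) * (2 * (\<Sum>j\<in>V_ge n xs a. W i j) - 1) > 0"
            using C 2 \<open>z < a\<close> by (intro mult_pos_pos) auto
          ultimately show False using sc by linarith
        next
          case 3
          with cg \<open>z \<noteq> a\<close> have "z > a" by auto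
          have "social_cost n W i z xs - social_cost n W i a xs \<ge> real_of_int (z - a) * (2 * (\<Sum>j\<in>V_le n xs a. W i j) - 1)"
            unfolding social_cost_def using lower_right[OF _ nn \<open>z > a\<close>, of xs] T le by simp
          moreover have "real_of_int (z - a) * (2 * (\<Sum>j\<in>V_le n xs a. W i j) - 1) > 0"
            using C 3 \<open>z > a\<close> by (intro mult_pos_pos) auto
          ultimately show False using sc by linarith
        qed
      qed
    qed
    then show "pareto_set n W (opinion_set k s) \<theta> i xs = {a}" using aP by blast
  qed
qed


theorem theorem1:
  fixes n :: nat and W :: "nat \<Rightarrow> nat \<Rightarrow> real" and k :: int and s :: nat
    and \<theta> :: int and xs :: "nat \<Rightarrow> int"
  assumes "n \<ge> 1"
    and "row_stochastic n W"
    and "\<theta> \<in> opinion_set k s"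
    and "\<forall>i\<in>{1..n}. xs i \<in> opinion_set k s"
  shows "is_equilibrium n W (opinion_set k s) \<theta> xs \<longleftrightarrow>
    (is_consensus n xs \<or>
     ((\<forall>z\<in>opinion_set k s. z < \<theta> \<longrightarrow> strictly_cohesive W (V_le n xs z)) \<and>
      (\<forall>z\<in>opinion_set k s. z > \<theta> \<longrightarrow> strictly_cohesive W (V_ge n xs z))))"
proof -
  have nn: "\<forall>i\<in>{1..n}. \<forall>j\<in>{1..n}. W i j \<ge> 0" and T: "\<forall>i\<in>{1..n}. (\<Sum>j\<in>{1..n}. W i j) = 1"
    using assms(2) unfolding row_stochastic_def by auto
  define NC where "NC = (\<forall>i\<in>{1..n}. (xs i > \<theta> \<longrightarrow> (\<Sum>j\<in>V_ge n xs (xs i). W i j) > 1/2) \<and>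
     (xs i < \<theta> \<longrightarrow> (\<Sum>j\<in>V_le n xs (xs i). W i j) > 1/2))"
  have EQ: "is_equilibrium n W (opinion_set k s) \<theta> xs \<longleftrightarrow> NC"
  proof -
    have "\<And>i. i \<in> {1..n} \<Longrightarrow> (pareto_set n W (opinion_set k s) \<theta> i xs = {xs i}) =
      ((xs i > \<theta> \<longrightarrow> (\<Sum>j\<in>V_ge n xs (xs i). W i j) > 1/2) \<and>
     (xs i < \<theta> \<longrightarrow> (\<Sum>j\<in>V_le n xs (xs i). W i j) > 1/2))"
      using node[OF assms(2) _ assms(3)] assms(4) by blast
    then show ?thesis unfolding is_equilibrium_def NC_def by (rule ball_cong[OF refl])
  qed
  let ?C2 = "(\<forall>z\<in>opinion_set k s. z < \<theta> \<longrightarrow> strictly_cohesive W (V_le n xs z)) \<and>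
      (\<forall>z\<in>opinion_set k s. z > \<theta> \<longrightarrow> strictly_cohesive W (V_ge n xs z))"
  have "NC \<longleftrightarrow> ?C2"
  proof
    assume NC
    show ?C2
    proof (intro conjI ballI impI)
      fix z assume "z < \<theta>"
      show "strictly_cohesive W (V_le n xs z)" unfolding strictly_cohesive_def
      proof
        fix i assume iV: "i \<in> V_le n xs z"
        then have i: "i \<in> {1..n}" and "xs i \<le> z" unfolding V_le_def by auto
        with \<open>NC\<close> \<open>z < \<theta>\<close> have "(\<Sum>j\<in>V_le n xs (xs i). W i j) > 1/2" unfolding NC_def by auto
        also have "(\<Sum>j\<in>V_le n xs (xs i). W i j) \<le> (\<Sum>j\<in>V_le n xs z. W i j)"
          by (rule sum_mono2) (use \<open>xs i \<le> z\<close> nn i in \<open>auto simp: V_le_def\<close>)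
        finally show "(\<Sum>j\<in>V_le n xs z. W i j) > 1/2" .
      qed
    next
      fix z assume "z > \<theta>"
      show "strictly_cohesive W (V_ge n xs z)" unfolding strictly_cohesive_def
      proof
        fix i assume iV: "i \<in> V_ge n xs z"
        then have i: "i \<in> {1..n}" and "xs i \<ge> z" unfolding V_ge_def by auto
        with \<open>NC\<close> \<open>z > \<theta>\<close> have "(\<Sum>j\<in>V_ge n xs (xs i). W i j) > 1/2" unfolding NC_def by auto
        also have "(\<Sum>j\<in>V_ge n xs (xs i). W i j) \<le> (\<Sum>j\<in>V_ge n xs z. W i j)"
          by (rule sum_mono2) (use \<open>xs i \<ge> z\<close> nn i in \<open>auto simp: V_ge_def\<close>)
        finally show "(\<Sum>j\<in>V_ge n xs z. W i j) > 1/2" .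
      qed
    qed
  next
    assume C: ?C2
    show NC unfolding NC_def
    proof (intro ballI conjI impI)
      fix i assume i: "i \<in> {1..n}" and "xs i > \<theta>"
      then have "strictly_cohesive W (V_ge n xs (xs i))" using C assms(4) by auto
      moreover have "i \<in> V_ge n xs (xs i)" using i unfolding V_ge_def by auto
      ultimately show "(\<Sum>j\<in>V_ge n xs (xs i). W i j) > 1/2" unfolding strictly_cohesive_def by auto
    next
      fix i assume i: "i \<in> {1..n}" and "xs i < \<theta>"
      then have "strictly_cohesive W (V_le n xs (xs i))" using C assms(4) by auto
      moreover have "i \<in> V_le n xs (xs i)" using i unfolding V_le_def by auto
      ultimately show "(\<Sum>j\<in>V_le n xs (xs i). W i j) > 1/2" unfolding strictly_cohesive_def by auto
    qed
  qed
  moreover have "is_consensus n xs \<Longrightarrow> NC"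
  proof -
    assume c: "is_consensus n xs"
    have "V_ge n xs (xs i) = {1..n}" if "i \<in> {1..n}" for i
    proof -
      have eq: "\<And>j. j \<in> {1..n} \<Longrightarrow> xs j = xs i" using c that unfolding is_consensus_def by blast
      show ?thesis unfolding V_ge_def using eq by auto
    qed
    have "V_le n xs (xs i) = {1..n}" if "i \<in> {1..n}" for i
    proof -
      have eq: "\<And>j. j \<in> {1..n} \<Longrightarrow> xs j = xs i" using c that unfolding is_consensus_def by blast
      show ?thesis unfolding V_le_def using eq by auto
    qed
    show NC unfolding NC_def
    proof (intro ballI conjI impI)
      fix i assume i: "i \<in> {1..n}"
      then show "(\<Sum>j\<in>V_ge n xs (xs i). W i j) > 1/2" "(\<Sum>j\<in>V_le n xs (xs i). W i j) > 1/2"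
        using T i \<open>\<And>i. i \<in> {1..n} \<Longrightarrow> V_ge n xs (xs i) = {1..n}\<close>
          \<open>\<And>i. i \<in> {1..n} \<Longrightarrow> V_le n xs (xs i) = {1..n}\<close> by simp_all
    qed
  qed
  ultimately show ?thesis using EQ by blast
qed

end
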